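(* Let $A=\mathbb{C}[x,y,z]$, let $s,t\in A\setminus\{0\}$ be coprime and equip $A$ with the Poisson bracket $\{x,y\}=t s_z-s t_z$, $\{y,z\}=t s_x-s t_x$, $\{z,x\}=t s_y-s t_y$. Let $(\lambda,\mu)\in\mathbb{P}^1(\mathbb{C})$ be such that $f_{\lambda,\mu}:=\lambda s-\mu t$ is a non-zero non-unit and let $u$ be an irreducible factor of $f_{\lambda,\mu}$ in $A$. Then $f_{\lambda,\mu}A$ is a Poisson ideal and $uA$ is a Poisson prime ideal of $A$.
   Context: Subscripts denote partial derivatives. A Poisson ideal is an ideal $I$ with $\{a,I\}\subseteq I$ for all $a\in A$; a Poisson prime ideal is a Poisson ideal that is prime. *)

theory Defs
  imports "HOL-Computational_Algebra.Computational_Algebra"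
begin

text \<open>A = C[x,y,z] is modelled as ((C[x])[y])[z]: the outermost polynomial
variable is z, the middle one y, the innermost one x.\<close>

type_synonym cpoly3 = "complex poly poly poly"

definition X3 :: cpoly3 where "X3 = [:[:[:0, 1:]:]:]"
definition Y3 :: cpoly3 where "Y3 = [:[:0, 1:]:]"
definition Z3 :: cpoly3 where "Z3 = [:0, 1:]"

definition const3 :: "complex \<Rightarrow> cpoly3" where "const3 c = [:[:[:c:]:]:]"

definition dx :: "cpoly3 \<Rightarrow> cpoly3" where "dx f = map_poly (map_poly pderiv) f"
definition dy :: "cpoly3 \<Rightarrow> cpoly3" where "dy f = map_poly pderiv f"
definition dz :: "cpoly3 \<Rightarrow> cpoly3" where "dz f = pderiv f"

definition pbr :: "cpoly3 \<Rightarrow> cpoly3 \<Rightarrow> cpoly3 \<Rightarrow> cpoly3 \<Rightarrow> cpoly3" where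
  "pbr s t f g =
     (t * dx s - s * dx t) * (dy f * dz g - dz f * dy g)
   + (t * dy s - s * dy t) * (dz f * dx g - dx f * dz g)
   + (t * dz s - s * dz t) * (dx f * dy g - dy f * dx g)"

definition is_ideal :: "'a::comm_ring_1 set \<Rightarrow> bool" where
  "is_ideal I \<longleftrightarrow> 0 \<in> I \<and> (\<forall>a\<in>I. \<forall>b\<in>I. a + b \<in> I) \<and> (\<forall>r. \<forall>a\<in>I. r * a \<in> I)"

definition is_prime_ideal :: "'a::comm_ring_1 set \<Rightarrow> bool" where
  "is_prime_ideal I \<longleftrightarrow> is_ideal I \<and> I \<noteq> UNIV \<and> (\<forall>a b. a * b \<in> I \<longrightarrow> a \<in> I \<or> b \<in> I)"

definition principal_ideal :: "'a::comm_ring_1 \<Rightarrow> 'a set" where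
  "principal_ideal f = {f * a | a. True}"

definition poisson_ideal :: "('a \<Rightarrow> 'a \<Rightarrow> 'a) \<Rightarrow> 'a::comm_ring_1 set \<Rightarrow> bool" where
  "poisson_ideal br I \<longleftrightarrow> is_ideal I \<and> (\<forall>a. \<forall>b\<in>I. br a b \<in> I)"

definition poisson_prime_ideal :: "('a \<Rightarrow> 'a \<Rightarrow> 'a) \<Rightarrow> 'a::comm_ring_1 set \<Rightarrow> bool" where
  "poisson_prime_ideal br I \<longleftrightarrow> poisson_ideal br I \<and> is_prime_ideal I"

end

theory Submission imports Defs "HOL-Computational_Algebra.Field_as_Ring" begin




lemma key:
  fixes u g l m s t sx sy sz tx ty tz fx fy fz gx gy gz ux uy uz ax ay az :: "'a::comm_ring_1"
  assumes "u*g = l*s - m*t"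
    and "fx = l*sx - m*tx" "fy = l*sy - m*ty" "fz = l*sz - m*tz"
    and "fx = u*gx + ux*g" "fy = u*gy + uy*g" "fz = u*gz + uz*g"
  shows "l * ((t*sx - s*tx)*(ay*uz - az*uy) + (t*sy - s*ty)*(az*ux - ax*uz) + (t*sz - s*tz)*(ax*uy - ay*ux))
    = u * ((t*gx - g*tx)*(ay*uz - az*uy) + (t*gy - g*ty)*(az*ux - ax*uz) + (t*gz - g*tz)*(ax*uy - ay*ux))"
proof -
  have e1: "l*(t*sx - s*tx) = t*fx - (u*g)*tx"
  proof -
    have "l*(t*sx - s*tx) = t*(l*sx) - (l*s)*tx" by (simp add: algebra_simps)
    also have "\<dots> = t*(fx + m*tx) - (u*g + m*t)*tx" using assms by (simp add: algebra_simps)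
    finally show ?thesis by (simp add: algebra_simps)
  qed
  have e2: "l*(t*sy - s*ty) = t*fy - (u*g)*ty"
  proof -
    have "l*(t*sy - s*ty) = t*(l*sy) - (l*s)*ty" by (simp add: algebra_simps)
    also have "\<dots> = t*(fy + m*ty) - (u*g + m*t)*ty" using assms by (simp add: algebra_simps)
    finally show ?thesis by (simp add: algebra_simps)
  qed
  have e3: "l*(t*sz - s*tz) = t*fz - (u*g)*tz"
  proof -
    have "l*(t*sz - s*tz) = t*(l*sz) - (l*s)*tz" by (simp add: algebra_simps)
    also have "\<dots> = t*(fz + m*tz) - (u*g + m*t)*tz" using assms by (simp add: algebra_simps)
    finally show ?thesis by (simp add: algebra_simps)
  qed
  have "l * ((t*sx - s*tx)*(ay*uz - az*uy) + (t*sy - s*ty)*(az*ux - ax*uz) + (t*sz - s*tz)*(ax*uy - ay*ux))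
     = (l*(t*sx - s*tx))*(ay*uz - az*uy) + (l*(t*sy - s*ty))*(az*ux - ax*uz) + (l*(t*sz - s*tz))*(ax*uy - ay*ux)"
    by (simp add: algebra_simps)
  also have "\<dots> = (t*fx - (u*g)*tx)*(ay*uz - az*uy) + (t*fy - (u*g)*ty)*(az*ux - ax*uz) + (t*fz - (u*g)*tz)*(ax*uy - ay*ux)"
    using e1 e2 e3 by simp
  also have "\<dots> = u * ((t*gx - g*tx)*(ay*uz - az*uy) + (t*gy - g*ty)*(az*ux - ax*uz) + (t*gz - g*tz)*(ax*uy - ay*ux))"
    using assms(5-7) by (simp add: algebra_simps)
  finally show ?thesis .
qed

definition isder :: "('a::comm_ring_1 \<Rightarrow> 'a) \<Rightarrow> bool" where
  "isder D \<longleftrightarrow> (\<forall>a b. D (a+b) = D a + D b) \<and> (\<forall>a b. D (a*b) = a * D b + D a * b)"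

lemma isder_0: "isder D \<Longrightarrow> D 0 = 0"
  unfolding isder_def by (metis add_cancel_right_right add_0)

lemma isder_diff: "isder D \<Longrightarrow> D (a - b) = D a - D b"
  unfolding isder_def by (metis diff_add_cancel eq_diff_eq)

lemma isder_mult: "isder D \<Longrightarrow> D (a*b) = a * D b + D a * b"
  unfolding isder_def by blast

lemma isder_sum: "isder D \<Longrightarrow> D (\<Sum>i\<le>(n::nat). f i) = (\<Sum>i\<le>n. D (f i))"
  by (induction n) (auto simp: isder_def isder_0)

lemma isder_map_poly:
  assumes D: "isder D" shows "isder (map_poly D)"
proof -
  have D0: "D 0 = 0" using isder_0[OF D] .
  have add: "map_poly D (p + q) = map_poly D p + map_poly D q" for p q
    by (rule poly_eqI) (simp add: coeff_map_poly D0 isder_def[THEN iffD1, OF D, THEN conjunct1])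
  have mul: "map_poly D (p * q) = p * map_poly D q + map_poly D p * q" for p q
  proof (rule poly_eqI)
    fix n
    have "coeff (map_poly D (p * q)) n = D (\<Sum>i\<le>n. coeff p i * coeff q (n - i))"
      by (simp add: coeff_map_poly D0 coeff_mult)
    also have "\<dots> = (\<Sum>i\<le>n. coeff p i * D (coeff q (n - i))) + (\<Sum>i\<le>n. D (coeff p i) * coeff q (n - i))"
      by (simp add: isder_sum[OF D] isder_mult[OF D] sum.distrib)
    also have "\<dots> = coeff (p * map_poly D q + map_poly D p * q) n"
      by (simp add: coeff_mult coeff_map_poly D0)
    finally show "coeff (map_poly D (p * q)) n = coeff (p * map_poly D q + map_poly D p * q) n" .
  qed
  show ?thesis unfolding isder_def using add mul by blast
qed

lemma isder_pderiv: "isder (pderiv :: 'a::idom poly \<Rightarrow> _)"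
  unfolding isder_def by (simp add: pderiv_add pderiv_mult algebra_simps)

lemma isder_dx: "isder dx" unfolding dx_def[abs_def]
  by (intro isder_map_poly isder_pderiv)
lemma isder_dy: "isder dy" unfolding dy_def[abs_def]
  by (intro isder_map_poly isder_pderiv)
lemma isder_dz: "isder dz" unfolding dz_def[abs_def]
  by (rule isder_pderiv)

lemma dconst: "dx (const3 c) = 0" "dy (const3 c) = 0" "dz (const3 c) = 0"
  by (simp_all add: dx_def dy_def dz_def const3_def pderiv_pCons map_poly_pCons)

lemma const3_mult: "const3 a * const3 b = const3 (a*b)"
  by (simp add: const3_def)
lemma const3_1: "const3 1 = 1" by (simp add: const3_def one_pCons)


lemma Dlin: assumes "isder D" "D (const3 l) = 0" "D (const3 m) = 0"
  shows "D (const3 l * s - const3 m * t) = const3 l * D s - const3 m * D t"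
  using assms by (simp add: isder_diff isder_mult)

lemma div_aux:
  assumes fg: "u*g = const3 l * s - const3 m * t" and l: "l \<noteq> 0"
  shows "u dvd pbr s t a u"
proof -
  let ?f = "const3 l * s - const3 m * t"
  have fx: "dx ?f = const3 l * dx s - const3 m * dx t" by (rule Dlin) (simp_all add: isder_dx dconst)
  have fy: "dy ?f = const3 l * dy s - const3 m * dy t" by (rule Dlin) (simp_all add: isder_dy dconst)
  have fz: "dz ?f = const3 l * dz s - const3 m * dz t" by (rule Dlin) (simp_all add: isder_dz dconst)
  have gx: "dx ?f = u * dx g + dx u * g" using isder_mult[OF isder_dx] fg by metis
  have gy: "dy ?f = u * dy g + dy u * g" using isder_mult[OF isder_dy] fg by metis
  have gz: "dz ?f = u * dz g + dz u * g" using isder_mult[OF isder_dz] fg by metis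
  obtain K where K: "const3 l * pbr s t a u = u * K"
    unfolding pbr_def
    using key[OF fg fx fy fz, of "dx g" "dx u" "dy g" "dy u" "dz g" "dz u"] gx gy gz by blast
  have "pbr s t a u = const3 (1/l) * (const3 l * pbr s t a u)"
    using l by (simp add: mult.assoc[symmetric] const3_mult const3_1)
  also have "\<dots> = u * (const3 (1/l) * K)" using K by (simp add: algebra_simps)
  finally show ?thesis by simp
qed

lemma const3_neg: "const3 (-x) = - const3 x" by (simp add: const3_def)

lemma pbr_swap: "pbr t s a b = - pbr s t a b"
proof -
  have e: "s*dx t - t*dx s = -(t*dx s - s*dx t)" "s*dy t - t*dy s = -(t*dy s - s*dy t)"
    "s*dz t - t*dz s = -(t*dz s - s*dz t)" by simp_all
  show ?thesis unfolding pbr_def e by (simp only: mult_minus_left minus_add_distrib)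
qed

lemma negneg: "- (a::'a::ab_group_add) - - b = b - a" by simp

lemma div_main:
  assumes fg: "u*g = const3 l * s - const3 m * t" and lm: "(l, m) \<noteq> (0, 0)"
  shows "u dvd pbr s t a u"
proof (cases "l = 0")
  case False then show ?thesis by (rule div_aux[OF fg])
next
  case True
  then have m: "-m \<noteq> 0" using lm by simp
  have e: "const3 (-m) * t - const3 (-l) * s = const3 l * s - const3 m * t"
    unfolding const3_neg mult_minus_left by (rule negneg)
  have "u*g = const3 (-m) * t - const3 (-l) * s" using fg e[symmetric] by (rule trans)
  from div_aux[OF this m] have "u dvd pbr t s a u" .
  then show ?thesis unfolding pbr_swap[of t s a u] by (rule dvd_minus_iff[THEN iffD1])
qed

lemma leib_small:
  fixes a b u c p q x y :: "'a::comm_ring_1"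
  shows "a * (u*p + x*c) - b * (u*q + y*c) = u*(a*p - b*q) + c*(a*x - b*y)"
  by (simp add: algebra_simps)
lemma leib_lin:
  fixes w1 w2 w3 P1 P2 P3 Q1 Q2 Q3 u c :: "'a::comm_ring_1"
  shows "w1 * (u*P1 + c*Q1) + w2 * (u*P2 + c*Q2) + w3 * (u*P3 + c*Q3)
   = u * (w1 * P1 + w2 * P2 + w3 * P3) + c * (w1*Q1 + w2*Q2 + w3*Q3)"
  by (simp only: distrib_left mult.left_commute[of _ u] mult.left_commute[of _ c] add_ac)
lemma leib_aux:
  fixes w1 w2 w3 ax ay az ux uy uz cx cy cz u c :: "'a::comm_ring_1"
  shows "w1 * (ay * (u*cz + uz*c) - az * (u*cy + uy*c)) + w2 * (az * (u*cx + ux*c) - ax * (u*cz + uz*c))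
     + w3 * (ax * (u*cy + uy*c) - ay * (u*cx + ux*c))
   = u * (w1 * (ay * cz - az * cy) + w2 * (az * cx - ax * cz) + w3 * (ax * cy - ay * cx))
     + c * (w1 * (ay * uz - az * uy) + w2 * (az * ux - ax * uz) + w3 * (ax * uy - ay * ux))"
  unfolding leib_small by (rule leib_lin)

lemma pbr_leib: "pbr s t a (u*c) = u * pbr s t a c + c * pbr s t a u"
  unfolding pbr_def isder_mult[OF isder_dx] isder_mult[OF isder_dy] isder_mult[OF isder_dz]
  by (rule leib_aux)

lemma principal_is_ideal: "is_ideal (principal_ideal (f::'a::comm_ring_1))"
  unfolding is_ideal_def principal_ideal_def
proof (intro conjI ballI allI)
  show "0 \<in> {f * a |a. True}" by (rule CollectI, rule exI[of _ 0]) simp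
next
  fix a b assume "a \<in> {f * a |a. True}" "b \<in> {f * a |a. True}"
  then obtain x y where "a = f*x" "b = f*y" by blast
  then have "a + b = f * (x + y)" by (simp add: distrib_left)
  then show "a + b \<in> {f * a |a. True}" by blast
next
  fix r a assume "a \<in> {f * a |a. True}"
  then obtain x where "a = f*x" by blast
  then have "r * a = f * (r * x)" by (simp add: mult.left_commute)
  then show "r * a \<in> {f * a |a. True}" by blast
qed

lemma poisson_principal:
  assumes "\<And>a. u dvd pbr s t a u"
  shows "poisson_ideal (pbr s t) (principal_ideal u)"
  unfolding poisson_ideal_def
proof (intro conjI ballI allI principal_is_ideal)
  fix a b assume "b \<in> principal_ideal u"
  then obtain c where b: "b = u*c" by (auto simp: principal_ideal_def)
  have "u dvd pbr s t a (u*c)" using assms[of a] by (simp add: pbr_leib)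
  then show "pbr s t a b \<in> principal_ideal u" unfolding b principal_ideal_def
    by (auto elim!: dvdE)
qed

theorem lemma3p4:
  fixes s t u :: cpoly3 and la mu :: complex
  assumes "s \<noteq> 0" and "t \<noteq> 0" and "coprime s t"
    and "(la, mu) \<noteq> (0, 0)"
    and "const3 la * s - const3 mu * t \<noteq> 0"
    and "\<not> is_unit (const3 la * s - const3 mu * t)"
    and "irreducible u" and "u dvd (const3 la * s - const3 mu * t)"
  shows "poisson_ideal (pbr s t) (principal_ideal (const3 la * s - const3 mu * t))
       \<and> poisson_prime_ideal (pbr s t) (principal_ideal u)"
proof
  show "poisson_ideal (pbr s t) (principal_ideal (const3 la * s - const3 mu * t))"
    by (rule poisson_principal, rule div_main[where g=1]) (use assms(4) in simp_all)
  obtain g where g: "u*g = const3 la * s - const3 mu * t" using assms(8) by (metis dvdE)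
  have pu: "poisson_ideal (pbr s t) (principal_ideal u)"
    by (rule poisson_principal, rule div_main[OF g assms(4)])
  have pr: "prime_elem u" using assms(7) by (rule irreducible_imp_prime_elem)
  have "is_prime_ideal (principal_ideal u)"
    unfolding is_prime_ideal_def
  proof (intro conjI allI impI principal_is_ideal)
    show "principal_ideal u \<noteq> UNIV"
    proof
      assume "principal_ideal u = UNIV"
      then have "1 \<in> principal_ideal u" by simp
      then obtain c where "1 = u * c" by (auto simp: principal_ideal_def)
      then have "u dvd 1" by (rule dvdI)
      with pr show False by (simp add: prime_elem_def)
    qed
  next
    fix a b assume "a * b \<in> principal_ideal u"
    then have "u dvd a * b" by (auto simp: principal_ideal_def)
    then have "u dvd a \<or> u dvd b" using pr prime_elem_dvd_mult_iff by blast
    then show "a \<in> principal_ideal u \<or> b \<in> principal_ideal u"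
      by (auto simp: principal_ideal_def elim!: dvdE)
  qed
  then show "poisson_prime_ideal (pbr s t) (principal_ideal u)"
    using pu by (simp add: poisson_prime_ideal_def)
qed

end
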